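(* For every $h\in\mathbb{C}$ with $|h-1|<1$, there exists a cubic polynomial $p$ with three distinct (simple) roots which is not unicritical, such that $N_{h,p}$ is not convergent, i.e. the Fatou set of $N_{h,p}$ is not equal to the union of the basins of attraction of the roots of $p$.
   Context: For a complex polynomial $p$ and $h\in\mathbb{C}\setminus\{0\}$, the relaxed Newton map is $N_{h,p}(z)=z-h\,\frac{p(z)}{p'(z)}$, a rational map of the Riemann sphere whose finite fixed points are the roots of $p$; a simple root is a fixed point with multiplier $1-h$, attracting when $|h-1|<1$. The basin of an attracting fixed point $z_0$ is $\{z:\lim_{k\to\infty}N_{h,p}^k(z)=z_0\}$. A polynomial is unicritical if it has the form $(z-\alpha)^n+\beta$. A polynomial is generic if all its roots are simple. *)

theory Defs
  imports "HOL-Computational_Algebra.Polynomial" Complex_Main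
begin

text \<open>Riemann sphere modelled as complex option; None is the point at infinity.\<close>

text \<open>At a finite point where p' vanishes: if p also vanishes (multiple root) the
  singularity is removable with value z, otherwise the value is infinity.
  At infinity: for deg p = d >= 1, N(z) = (1 - h/d) z + O(1), so infinity is fixed
  unless h = d, in which case N(infinity) = - coeff p (d-1) / (d * lead_coeff p).\<close>
definition relaxed_newton :: "complex \<Rightarrow> complex poly \<Rightarrow> complex option \<Rightarrow> complex option" where
  "relaxed_newton h p w = (case w of
      None \<Rightarrow> (if degree p \<ge> 1 \<and> h = of_nat (degree p)
               then Some (- coeff p (degree p - 1) / (of_nat (degree p) * lead_coeff p))
               else None)
    | Some z \<Rightarrow> (if poly (pderiv p) z = 0
                 then (if poly p z = 0 then Some z else None)
                 else Some (z - h * poly p z / poly (pderiv p) z)))"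

definition chordal_dist :: "complex option \<Rightarrow> complex option \<Rightarrow> real" where
  "chordal_dist u v = (case (u, v) of
      (Some z, Some w) \<Rightarrow> 2 * cmod (z - w) / sqrt ((1 + (cmod z)\<^sup>2) * (1 + (cmod w)\<^sup>2))
    | (Some z, None) \<Rightarrow> 2 / sqrt (1 + (cmod z)\<^sup>2)
    | (None, Some w) \<Rightarrow> 2 / sqrt (1 + (cmod w)\<^sup>2)
    | (None, None) \<Rightarrow> 0)"

definition sball :: "complex option \<Rightarrow> real \<Rightarrow> complex option set" where
  "sball x e = {y. chordal_dist x y < e}"

definition locally_unif_conv ::
  "complex option set \<Rightarrow> (nat \<Rightarrow> complex option \<Rightarrow> complex option) \<Rightarrow> (complex option \<Rightarrow> complex option) \<Rightarrow> bool" where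
  "locally_unif_conv U F g \<longleftrightarrow>
     (\<forall>x\<in>U. \<exists>\<delta>>0. sball x \<delta> \<subseteq> U \<and>
        (\<forall>\<epsilon>>0. \<exists>N. \<forall>n\<ge>N. \<forall>y\<in>sball x \<delta>. chordal_dist (F n y) (g y) < \<epsilon>))"

definition normal_family :: "complex option set \<Rightarrow> (nat \<Rightarrow> complex option \<Rightarrow> complex option) \<Rightarrow> bool" where
  "normal_family U F \<longleftrightarrow>
     (\<forall>r :: nat \<Rightarrow> nat. \<exists>s g. strict_mono s \<and> locally_unif_conv U (\<lambda>n. F (r (s n))) g)"

definition fatou_set :: "(complex option \<Rightarrow> complex option) \<Rightarrow> complex option set" where
  "fatou_set f = {x. \<exists>e>0. normal_family (sball x e) (\<lambda>k. f ^^ k)}"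

definition basin :: "(complex option \<Rightarrow> complex option) \<Rightarrow> complex option \<Rightarrow> complex option set" where
  "basin f z0 = {x. (\<lambda>k. chordal_dist ((f ^^ k) x) z0) \<longlonglongrightarrow> 0}"

text \<open>Unicritical: (z - alpha)^n + beta, up to a nonzero scalar factor
  (the Newton map is unchanged by scaling p).\<close>
definition unicritical :: "complex poly \<Rightarrow> bool" where
  "unicritical p \<longleftrightarrow> (\<exists>a \<alpha> \<beta> (n::nat). a \<noteq> 0 \<and> p = smult a ([:-\<alpha>, 1:] ^ n + [:\<beta>:]))"

end

theory Submission imports Defs "HOL-Library.Infinite_Set" "HOL-Analysis.Product_Vector" begin

definition pB :: "complex \<Rightarrow> complex poly" where
  "pB h = [:-2, 2*h, h*(1-h), h*(h-2):]"

lemma h_facts: assumes "cmod (h - 1) < 1" shows "h \<noteq> 0" "h \<noteq> 2" "h \<noteq> 3"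
  using assms by auto

lemma disc_re: assumes "cmod (h - 1) < 1" shows "(Re h - 1)^2 + (Im h)^2 < 1"
proof -
  have "cmod (h-1)^2 < 1" using assms by (simp add: power_less_one_iff abs_less_iff)
  thus ?thesis by (simp add: cmod_def)
qed

lemma g_nz: assumes "cmod (h - 1) < 1" shows "h^3 - 12*h^2 + 46*h - 54 \<noteq> 0"
proof
  assume e: "h^3 - 12*h^2 + 46*h - 54 = 0"
  obtain x y where hxy: "h = Complex x y" by (cases h)
  have d: "(x-1)^2 + y^2 < 1" using disc_re[OF assms] hxy by simp
  have "h^3 - 12*h^2 + 46*h - 54 = Complex (x^3 - 3*x*y^2 - 12*(x^2-y^2) + 46*x - 54) (y*(3*x^2 - y^2 - 24*x + 46))"
    unfolding hxy by (simp add: complex_eq_iff power2_eq_square power3_eq_cube algebra_simps)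
  hence r: "x^3 - 3*x*y^2 - 12*(x^2-y^2) + 46*x - 54 = 0" and i: "y*(3*x^2 - y^2 - 24*x + 46) = 0"
    using e by (simp_all add: complex_eq_iff)
  show False
  proof (cases "y = 0")
    case True
    hence x: "0 < x" "x < 2" proof -
      have "(x-1)^2 < 1" using d True by simp
      hence "\<bar>x-1\<bar> < 1" by (simp add: abs_square_less_1)
      thus "0 < x" "x < 2" by auto
    qed
    have "(x-2)*((x-5)^2+1) < 0" using x by (intro mult_neg_pos) (auto intro: add_nonneg_pos)
    moreover have "x^3 - 3*x*y^2 - 12*(x^2-y^2) + 46*x - 54 = (x-2)*((x-5)^2+1) - 2"
      using True by (simp add: power2_eq_square power3_eq_cube algebra_simps)
    ultimately show False using r by simp
  next
    case False
    hence "y^2 = 3*x^2 - 24*x + 46" using i by simp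
    hence "4*(x-13/4)^2 + 15/4 < 0" using d by (simp add: power2_eq_square algebra_simps)
    thus False using zero_le_power2[of "x-13/4"] by linarith
  qed
qed

lemma q_nz: assumes "cmod (h - 1) < 1" shows "h^2 - 8*h + 13 \<noteq> 0"
proof
  assume e: "h^2 - 8*h + 13 = 0"
  obtain x y where hxy: "h = Complex x y" by (cases h)
  have d: "(x-1)^2 + y^2 < 1" using disc_re[OF assms] hxy by simp
  have "h^2 - 8*h + 13 = Complex (x^2 - y^2 - 8*x + 13) (y*(2*x - 8))"
    unfolding hxy by (simp add: complex_eq_iff power2_eq_square algebra_simps)
  hence r: "x^2 - y^2 - 8*x + 13 = 0" and i: "y*(2*x - 8) = 0"
    using e by (simp_all add: complex_eq_iff)
  show False
  proof (cases "y = 0")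
    case True
    hence x: "0 < x" "x < 2" proof -
      have "(x-1)^2 < 1" using d True by simp
      hence "\<bar>x-1\<bar> < 1" by (simp add: abs_square_less_1)
      thus "0 < x" "x < 2" by auto
    qed
    have "x^2 - y^2 - 8*x + 13 = (x-4)^2 - 3" using True by (simp add: power2_eq_square algebra_simps)
    moreover have "(x-4)^2 > 3"
    proof -
      have "2 < 4-x" using x by simp
      hence "2*2 < (4-x)*(4-x)" by (intro mult_strict_mono) auto
      thus ?thesis by (simp add: power2_eq_square algebra_simps)
    qed
    ultimately show False using r by simp
  next
    case False
    hence "x = 4" using i by simp
    thus False using d zero_le_power2[of y] by simp
  qed
qed

lemma pB_simps: "poly (pB h) z = h*(h-2)*z^3 + h*(1-h)*z^2 + 2*h*z - 2"
  "poly (pderiv (pB h)) z = 3*h*(h-2)*z^2 + 2*h*(1-h)*z + 2*h"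
  "poly (pderiv (pderiv (pB h))) z = 6*h*(h-2)*z + 2*h*(1-h)"
  by (simp_all add: pB_def pderiv_pCons algebra_simps power2_eq_square power3_eq_cube)

lemma pB_deg: assumes "cmod (h - 1) < 1" shows "degree (pB h) = 3"
  using h_facts[OF assms] by (simp add: pB_def)

lemma pB_rsf: assumes "cmod (h - 1) < 1" shows "rsquarefree (pB h)"
  unfolding rsquarefree_roots
proof (intro allI notI)
  fix z assume "poly (pB h) z = 0 \<and> poly (pderiv (pB h)) z = 0"
  hence a: "h*(h-2)*z^3 + h*(1-h)*z^2 + 2*h*z - 2 = 0" and b: "3*h*(h-2)*z^2 + 2*h*(1-h)*z + 2*h = 0"
    by (simp_all add: pB_simps)
  have "h^2*(h-2)*(h^3 - 12*h^2 + 46*h - 54) = 0" using a b by algebra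
  thus False using h_facts[OF assms] g_nz[OF assms] by simp
qed

lemma lin_cube: "[:c, 1:]^3 = [:c^3, 3*c^2, 3*c, 1::complex:]"
  by (simp add: power3_eq_cube power2_eq_square algebra_simps numeral_3_eq_3)

lemma pB_nuni: assumes "cmod (h - 1) < 1" shows "\<not> unicritical (pB h)"
proof
  assume "unicritical (pB h)"
  then obtain a \<alpha> \<beta> n where a: "a \<noteq> 0" and p: "pB h = smult a ([:-\<alpha>, 1:] ^ n + [:\<beta>:])"
    unfolding unicritical_def by blast
  have n: "n = 3"
  proof (cases n)
    case 0
    thus ?thesis using p pB_deg[OF assms] by (simp add: one_pCons)
  next
    case (Suc m)
    have "degree ([:-\<alpha>, 1:] ^ n) = n" by (simp add: degree_power_eq)
    hence "degree ([:-\<alpha>, 1:] ^ n + [:\<beta>:]) = n" using Suc by (subst degree_add_eq_left) auto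
    thus ?thesis using p pB_deg[OF assms] a by simp
  qed
  have "pB h = [:a*((-\<alpha>)^3+\<beta>), a*(3*\<alpha>^2), a*(-3*\<alpha>), a:]"
    using p n by (simp add: lin_cube)
  hence e: "a*(3*\<alpha>^2) = 2*h" "a*(-3*\<alpha>) = h*(1-h)" "a = h*(h-2)"
    by (simp_all add: pB_def)
  have "h^2*(h^2-8*h+13) = 0" using e by algebra
  thus False using h_facts[OF assms] q_nz[OF assms] by simp
qed


section \<open>Chordal metric via stereographic embedding\<close>

definition stp :: "complex option \<Rightarrow> complex \<times> real" where
  "stp u = (case u of None \<Rightarrow> (0, 1)
     | Some z \<Rightarrow> (of_real (2 / (1 + (cmod z)^2)) * z, ((cmod z)^2 - 1) / ((cmod z)^2 + 1)))"

lemma stereo_aux: fixes t :: real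
  shows "(2*t/(1+t^2))^2 + ((t^2-1)/(t^2+1) - 1)^2 = (2/sqrt(1+t^2))^2"
    and "(2*t/(1+t^2))^2 + (1 - (t^2-1)/(t^2+1))^2 = (2/sqrt(1+t^2))^2"
proof -
  have p0: "1 + t^2 > 0" by (simp add: add_pos_nonneg)
  hence p: "1 + t^2 > 0" "t^2 + 1 > 0" by linarith+
  have r: "(2/sqrt(1+t^2))^2 = 4/(1+t^2)" using p by (simp add: power_divide)
  show 2: "(2*t/(1+t^2))^2 + (1 - (t^2-1)/(t^2+1))^2 = (2/sqrt(1+t^2))^2"
  proof -
    have a: "1 - (t^2-1)/(t^2+1) = 2/(1+t^2)" using p by (simp add: field_simps)
    have "(2*t/(1+t^2))^2 + (2/(1+t^2))^2 = 4*(1+t^2)/(1+t^2)^2"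
      by (simp add: power_divide power_mult_distrib add_divide_distrib algebra_simps)
    also have "\<dots> = 4/(1+t^2)"
    proof -
      have g: "u \<noteq> 0 \<Longrightarrow> 4*u/u^2 = 4/u" for u :: real by (simp add: power2_eq_square)
      show ?thesis using g[of "1+t^2"] p by simp
    qed
    finally show ?thesis unfolding r a .
  qed
  show "(2*t/(1+t^2))^2 + ((t^2-1)/(t^2+1) - 1)^2 = (2/sqrt(1+t^2))^2"
    using 2 by (simp only: power2_commute)
qed

lemma chordal_stp: "chordal_dist u v = dist (stp u) (stp v)"
proof (cases u; cases v)
  fix z w assume u: "u = Some z" and v: "v = Some w"
  obtain x1 y1 where z: "z = Complex x1 y1" by (cases z)
  obtain x2 y2 where w: "w = Complex x2 y2" by (cases w)
  define a where "a = x1^2 + y1^2"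
  define b where "b = x2^2 + y2^2"
  have "a \<ge> 0" unfolding a_def by simp
  hence a0: "a \<ge> 0" "1 + a > 0" "a + 1 > 0" by linarith+
  have "b \<ge> 0" unfolding b_def by simp
  hence b0: "b \<ge> 0" "1 + b > 0" "b + 1 > 0" by linarith+
  have cz: "(cmod z)^2 = a" unfolding z a_def by (simp add: cmod_def)
  have cw: "(cmod w)^2 = b" unfolding w b_def by (simp add: cmod_def)
  have czw: "(cmod (z - w))^2 = (x1-x2)^2 + (y1-y2)^2" unfolding z w by (simp add: cmod_def)
  have "dist (stp u) (stp v) = sqrt ((cmod (of_real (2/(1+a)) * z - of_real (2/(1+b)) * w))^2 + ((a-1)/(a+1) - (b-1)/(b+1))^2)"
    unfolding u v stp_def option.case dist_Pair_Pair cz cw by (simp add: dist_norm dist_real_def)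
  also have "(cmod (of_real (2/(1+a)) * z - of_real (2/(1+b)) * w))^2 = (2*x1/(1+a) - 2*x2/(1+b))^2 + (2*y1/(1+a) - 2*y2/(1+b))^2"
    unfolding z w by (simp add: cmod_def)
  also have "(2*x1/(1+a) - 2*x2/(1+b))^2 + (2*y1/(1+a) - 2*y2/(1+b))^2 + ((a-1)/(a+1) - (b-1)/(b+1))^2
      = (2 * cmod (z - w) / sqrt ((1 + (cmod z)^2) * (1 + (cmod w)^2)))^2"
  proof -
    have "(2 * cmod (z - w) / sqrt ((1 + (cmod z)^2) * (1 + (cmod w)^2)))^2 = 4 * ((x1-x2)^2 + (y1-y2)^2) / ((1+a)*(1+b))"
      using a0 b0 by (simp add: power_divide czw cz cw power_mult_distrib)
    also have "\<dots> = 4 * (((x1-x2)^2 + (y1-y2)^2) * (1+a) * (1+b)) / ((1+a)^2*(1+b)^2)"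
    proof -
      have D: "(1+a)*(1+b) \<noteq> 0" using a0 b0 by simp
      have g: "D \<noteq> 0 \<Longrightarrow> 4*X/D = 4*(X*D)/(D*D)" for X D :: real
        by (simp add: field_simps)
      have "(1+a)^2*(1+b)^2 = ((1+a)*(1+b)) * ((1+a)*(1+b))" by (simp add: power2_eq_square)
      thus ?thesis using g[OF D, of "(x1-x2)^2 + (y1-y2)^2"] by (simp add: mult.assoc)
    qed
    also have "((x1-x2)^2 + (y1-y2)^2) * (1+a) * (1+b) = (x1*(1+b)-x2*(1+a))^2 + (y1*(1+b)-y2*(1+a))^2 + (a-b)^2"
      unfolding a_def b_def by algebra
    also have "4 * ((x1*(1+b)-x2*(1+a))^2 + (y1*(1+b)-y2*(1+a))^2 + (a-b)^2) / ((1+a)^2*(1+b)^2)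
       = (2*x1/(1+a) - 2*x2/(1+b))^2 + (2*y1/(1+a) - 2*y2/(1+b))^2 + ((a-1)/(a+1) - (b-1)/(b+1))^2"
    proof -
      have e1: "2*x1/(1+a) - 2*x2/(1+b) = 2*(x1*(1+b)-x2*(1+a))/((1+a)*(1+b))"
        using a0 b0 by (simp add: field_simps)
      have e2: "2*y1/(1+a) - 2*y2/(1+b) = 2*(y1*(1+b)-y2*(1+a))/((1+a)*(1+b))"
        using a0 b0 by (simp add: field_simps)
      have e3: "(a-1)/(a+1) - (b-1)/(b+1) = 2*(a-b)/((1+a)*(1+b))"
        using a0 b0 by (simp add: field_simps)
      have g: "(2*P/D)^2 + (2*Q/D)^2 + (2*R/D)^2 = 4*(P^2+Q^2+R^2)/D^2" for P Q R D :: real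
        by (simp add: power_divide power_mult_distrib add_divide_distrib algebra_simps)
      show ?thesis unfolding e1 e2 e3 g by (simp add: power_mult_distrib)
    qed
    finally show ?thesis by simp
  qed
  also have "sqrt ((2 * cmod (z - w) / sqrt ((1 + (cmod z)^2) * (1 + (cmod w)^2)))^2) = chordal_dist u v"
    unfolding u v chordal_dist_def by simp
  finally show ?thesis by simp
next
  fix z assume u: "u = Some z" and v: "v = None"
  have a0: "1 + (cmod z)^2 > 0" by (simp add: add_pos_nonneg)
  have "dist (stp u) (stp v) = sqrt ((cmod (of_real (2 / (1 + (cmod z)^2)) * z))^2 + (((cmod z)^2 - 1) / ((cmod z)^2 + 1) - 1)^2)"
    unfolding u v stp_def option.case dist_Pair_Pair by (simp add: dist_norm dist_real_def)
  also have "(cmod (of_real (2 / (1 + (cmod z)^2)) * z))^2 + (((cmod z)^2 - 1) / ((cmod z)^2 + 1) - 1)^2 = (2 / sqrt (1 + (cmod z)^2))^2"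
  proof -
    have n: "cmod (of_real (2 / (1 + (cmod z)^2)) * z) = 2 * cmod z / (1 + (cmod z)^2)"
      unfolding norm_mult norm_of_real using a0 by simp
    show ?thesis unfolding n using stereo_aux[of "cmod z"] by simp
  qed
  finally show ?thesis unfolding u v chordal_dist_def using a0 by simp
next
  fix w assume u: "u = None" and v: "v = Some w"
  have a0: "1 + (cmod w)^2 > 0" by (simp add: add_pos_nonneg)
  have "dist (stp u) (stp v) = sqrt ((cmod (of_real (2 / (1 + (cmod w)^2)) * w))^2 + (1 - ((cmod w)^2 - 1) / ((cmod w)^2 + 1))^2)"
    unfolding u v stp_def option.case dist_Pair_Pair by (simp add: dist_norm dist_real_def norm_minus_commute)
  also have "(cmod (of_real (2 / (1 + (cmod w)^2)) * w))^2 + (1 - ((cmod w)^2 - 1) / ((cmod w)^2 + 1))^2 = (2 / sqrt (1 + (cmod w)^2))^2"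
  proof -
    have n: "cmod (of_real (2 / (1 + (cmod w)^2)) * w) = 2 * cmod w / (1 + (cmod w)^2)"
      unfolding norm_mult norm_of_real using a0 by simp
    show ?thesis unfolding n using stereo_aux[of "cmod w"] by simp
  qed
  finally show ?thesis unfolding u v chordal_dist_def using a0 by simp
next
  assume "u = None" "v = None" thus ?thesis by (simp add: chordal_dist_def stp_def)
qed

lemma chordal_self: "chordal_dist u u = 0"
  by (simp add: chordal_stp)

lemma chordal_tri: "chordal_dist x z \<le> chordal_dist x y + chordal_dist y z"
  unfolding chordal_stp by (rule dist_triangle)

lemma sball_open: assumes "x \<in> sball x0 e" shows "\<exists>d>0. sball x d \<subseteq> sball x0 e"
proof -
  have "chordal_dist x0 x < e" using assms by (simp add: sball_def)
  moreover have "sball x (e - chordal_dist x0 x) \<subseteq> sball x0 e"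
  proof
    fix y assume "y \<in> sball x (e - chordal_dist x0 x)"
    hence "chordal_dist x y < e - chordal_dist x0 x" by (simp add: sball_def)
    thus "y \<in> sball x0 e" using chordal_tri[of x0 y x] by (simp add: sball_def)
  qed
  ultimately show ?thesis by (intro exI[of _ "e - chordal_dist x0 x"]) auto
qed

lemma chordal_le: "chordal_dist (Some a) (Some b) \<le> 2 * cmod (a - b)"
proof -
  have "1 * 1 \<le> (1 + (cmod a)^2) * (1 + (cmod b)^2)"
    by (intro mult_mono) auto
  hence "1 \<le> sqrt ((1 + (cmod a)^2) * (1 + (cmod b)^2))"
    by simp
  hence "2 * cmod (a - b) / sqrt ((1 + (cmod a)^2) * (1 + (cmod b)^2)) \<le> 2 * cmod (a - b)"
    using divide_left_mono[of 1 "sqrt ((1 + (cmod a)^2) * (1 + (cmod b)^2))" "2 * cmod (a - b)"] by simp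
  thus ?thesis by (simp add: chordal_dist_def)
qed

lemma chordal_0: "chordal_dist (Some 0) (Some z) \<ge> min 1 (cmod z)"
proof -
  have s: "sqrt (1 + (cmod z)^2) > 0" by (simp add: add_pos_nonneg)
  have e: "chordal_dist (Some 0) (Some z) = 2 * cmod z / sqrt (1 + (cmod z)^2)"
    by (simp add: chordal_dist_def)
  show ?thesis
  proof (cases "cmod z \<ge> 1")
    case True
    have "1 \<le> (cmod z)^2" using True by (simp add: one_le_power)
    hence "1 + (cmod z)^2 \<le> (2 * cmod z)^2" by (simp add: power_mult_distrib)
    hence "sqrt (1 + (cmod z)^2) \<le> sqrt ((2 * cmod z)^2)"
      by (rule real_sqrt_le_mono)
    moreover have "sqrt ((2 * cmod z)^2) = 2 * cmod z" by (subst real_sqrt_abs) simp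
    ultimately have "sqrt (1 + (cmod z)^2) \<le> 2 * cmod z" by linarith
    thus ?thesis using e s True by (simp add: le_divide_eq min_def)
  next
    case False
    have "(cmod z)^2 \<le> 1" using False by (simp add: power_le_one)
    hence "sqrt (1 + (cmod z)^2) \<le> sqrt 4"
      by (intro real_sqrt_le_mono) simp
    hence "sqrt (1 + (cmod z)^2) \<le> 2" by (simp add: real_sqrt_four)
    hence "cmod z * sqrt (1 + (cmod z)^2) \<le> 2 * cmod z"
      using mult_left_mono[of "sqrt (1 + (cmod z)^2)" 2 "cmod z"] by (simp add: mult.commute)
    thus ?thesis using e s False by (simp add: le_divide_eq min_def)
  qed
qed

lemma sball0: assumes "y \<in> sball (Some 0) (min 1 d)" shows "\<exists>z. y = Some z \<and> cmod z < d"
proof (cases y)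
  case None
  thus ?thesis using assms by (simp add: sball_def chordal_dist_def)
next
  case (Some z)
  have "chordal_dist (Some 0) (Some z) < min 1 d" using assms Some by (simp add: sball_def)
  hence "min 1 (cmod z) < min 1 d" using chordal_0[of z] by linarith
  thus ?thesis using Some by auto
qed


definition fB :: "complex \<Rightarrow> complex \<Rightarrow> complex" where
  "fB h z = z - h * poly (pB h) z / poly (pderiv (pB h)) z"

lemma N_Some: "poly (pderiv (pB h)) z \<noteq> 0 \<Longrightarrow> relaxed_newton h (pB h) (Some z) = Some (fB h z)"
  by (simp add: relaxed_newton_def fB_def)

lemma f01: assumes "cmod (h - 1) < 1"
  shows "poly (pderiv (pB h)) 0 \<noteq> 0" "poly (pderiv (pB h)) 1 \<noteq> 0" "fB h 0 = 1" "fB h 1 = 0"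
  using h_facts[OF assms] by (simp_all add: fB_def pB_simps field_simps power2_eq_square power3_eq_cube)

lemma f_deriv: assumes "poly (pderiv (pB h)) z \<noteq> 0"
  shows "(fB h has_field_derivative
     1 - h * ((poly (pderiv (pB h)) z * poly (pderiv (pB h)) z - poly (pderiv (pderiv (pB h))) z * poly (pB h) z)
              / (poly (pderiv (pB h)) z ^ Suc (Suc 0)))) (at z)"
proof -
  have q: "((\<lambda>y. poly (pB h) y / poly (pderiv (pB h)) y) has_field_derivative
     ((poly (pderiv (pB h)) z * poly (pderiv (pB h)) z - poly (pderiv (pderiv (pB h))) z * poly (pB h) z)
              / (poly (pderiv (pB h)) z ^ Suc (Suc 0)))) (at z)"
    by (rule DERIV_quotient[OF poly_DERIV poly_DERIV assms])
  have "((\<lambda>y. y - h * (poly (pB h) y / poly (pderiv (pB h)) y)) has_field_derivative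
     1 - h * ((poly (pderiv (pB h)) z * poly (pderiv (pB h)) z - poly (pderiv (pderiv (pB h))) z * poly (pB h) z)
              / (poly (pderiv (pB h)) z ^ Suc (Suc 0)))) (at z)"
    by (rule DERIV_diff[OF DERIV_ident DERIV_cmult[OF q]])
  moreover have "(\<lambda>y. y - h * (poly (pB h) y / poly (pderiv (pB h)) y)) = fB h"
    by (rule ext) (simp add: fB_def)
  ultimately show ?thesis by simp
qed

lemma f_deriv0: assumes "cmod (h - 1) < 1" shows "(fB h has_field_derivative 0) (at 0)"
proof -
  have "1 - h * ((poly (pderiv (pB h)) 0 * poly (pderiv (pB h)) 0 - poly (pderiv (pderiv (pB h))) 0 * poly (pB h) 0)
              / (poly (pderiv (pB h)) 0 ^ Suc (Suc 0))) = 0"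
    using h_facts[OF assms] by (simp add: pB_simps field_simps power2_eq_square)
  thus ?thesis using f_deriv[OF f01(1)[OF assms]] by simp
qed

lemma f_cont0: assumes "cmod (h - 1) < 1"
  shows "\<forall>\<epsilon>>0. \<exists>\<eta>>0. \<forall>w. cmod w < \<eta> \<longrightarrow> cmod (fB h w - 1) < \<epsilon>"
proof (intro allI impI)
  fix \<epsilon> :: real assume e: "\<epsilon> > 0"
  have "isCont (fB h) 0" using f_deriv0[OF assms] by (rule DERIV_isCont)
  hence "fB h \<midarrow>0\<rightarrow> 1" using f01(3)[OF assms] by (simp add: isCont_def)
  then obtain s where s: "s > 0" "\<forall>x. x \<noteq> 0 \<and> norm (x - 0) < s \<longrightarrow> norm (fB h x - 1) < \<epsilon>"
    using e unfolding LIM_eq by blast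
  show "\<exists>\<eta>>0. \<forall>w. cmod w < \<eta> \<longrightarrow> cmod (fB h w - 1) < \<epsilon>"
  proof (intro exI[of _ s] conjI allI impI)
    fix w :: complex assume "cmod w < s"
    thus "cmod (fB h w - 1) < \<epsilon>" using s e f01(3)[OF assms] by (cases "w = 0") auto
  qed (use s in auto)
qed

lemma contraction: assumes "cmod (h - 1) < 1"
  shows "\<exists>\<delta>>0. \<forall>z. cmod z < \<delta> \<longrightarrow> poly (pderiv (pB h)) z \<noteq> 0 \<and>
            poly (pderiv (pB h)) (fB h z) \<noteq> 0 \<and> cmod (fB h (fB h z)) \<le> cmod z / 2"
proof -
  let ?f = "fB h" and ?q = "poly (pderiv (pB h))"
  obtain D1 where D1: "(?f has_field_derivative D1) (at 1)"
    using f_deriv[OF f01(2)[OF assms]] by blast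
  have "(?f \<circ> ?f has_field_derivative D1 * 0) (at 0)"
    by (rule DERIV_chain) (use D1 f01(3)[OF assms] f_deriv0[OF assms] in auto)
  hence "((\<lambda>y. ((?f \<circ> ?f) y - (?f \<circ> ?f) 0) / (y - 0)) \<longlongrightarrow> 0) (at 0)"
    unfolding has_field_derivative_iff by simp
  hence "((\<lambda>y. ?f (?f y) / y) \<longlongrightarrow> 0) (at 0)" using f01[OF assms] by simp
  hence "\<forall>e>0. eventually (\<lambda>y. dist (?f (?f y) / y) 0 < e) (at 0)" by (simp only: tendsto_iff)
  hence ev1: "eventually (\<lambda>y. dist (?f (?f y) / y) 0 < 1/2) (at 0)"
    by (rule allE[where x="1/2"]) simp
  have c0: "isCont ?f 0" using f_deriv0[OF assms] by (rule DERIV_isCont)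
  have "isCont ?q 0" by simp
  hence "(?q \<longlongrightarrow> ?q 0) (at 0)" by (simp add: isCont_def)
  hence ev2: "eventually (\<lambda>y. ?q y \<noteq> 0) (at 0)"
    using f01(1)[OF assms] by (rule tendsto_imp_eventually_ne)
  have "isCont (\<lambda>y. ?q (?f y)) 0" by (rule isCont_o2[OF c0]) simp
  hence "((\<lambda>y. ?q (?f y)) \<longlongrightarrow> ?q (?f 0)) (at 0)" by (simp add: isCont_def)
  hence ev3: "eventually (\<lambda>y. ?q (?f y) \<noteq> 0) (at 0)"
    using f01(2,3)[OF assms] by (intro tendsto_imp_eventually_ne) auto
  have "eventually (\<lambda>y. dist (?f (?f y) / y) 0 < 1/2 \<and> ?q y \<noteq> 0 \<and> ?q (?f y) \<noteq> 0) (at 0)"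
    by (intro eventually_conj ev1 ev2 ev3)
  then obtain d where d: "d > 0" "\<forall>y. y \<noteq> 0 \<and> dist y 0 < d \<longrightarrow>
      dist (?f (?f y) / y) 0 < 1/2 \<and> ?q y \<noteq> 0 \<and> ?q (?f y) \<noteq> 0"
    unfolding eventually_at by auto
  have "\<forall>z. cmod z < d \<longrightarrow> ?q z \<noteq> 0 \<and> ?q (?f z) \<noteq> 0 \<and> cmod (?f (?f z)) \<le> cmod z / 2"
  proof (intro allI impI)
    fix z :: complex assume z: "cmod z < d"
    show "?q z \<noteq> 0 \<and> ?q (?f z) \<noteq> 0 \<and> cmod (?f (?f z)) \<le> cmod z / 2"
    proof (cases "z = 0")
      case True thus ?thesis using f01[OF assms] by simp
    next
      case False
      hence h: "dist (?f (?f z) / z) 0 < 1/2 \<and> ?q z \<noteq> 0 \<and> ?q (?f z) \<noteq> 0" using d z by auto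
      hence "cmod (?f (?f z)) / cmod z < 1/2" by (simp add: norm_divide)
      hence "cmod (?f (?f z)) < cmod z / 2" using False by (simp add: divide_less_eq)
      thus ?thesis using h by simp
    qed
  qed
  thus ?thesis using d by blast
qed

lemma iter:
  assumes c: "\<forall>z. cmod z < \<delta> \<longrightarrow> poly (pderiv (pB h)) z \<noteq> 0 \<and>
            poly (pderiv (pB h)) (fB h z) \<noteq> 0 \<and> cmod (fB h (fB h z)) \<le> cmod z / 2"
    and z: "cmod z < \<delta>"
  shows "(relaxed_newton h (pB h) ^^ (2*k)) (Some z) = Some (((fB h \<circ> fB h) ^^ k) z) \<and>
         cmod (((fB h \<circ> fB h) ^^ k) z) \<le> cmod z / 2^k"
proof (induction k)
  case 0 thus ?case by simp
next
  case (Suc k)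
  let ?w = "((fB h \<circ> fB h) ^^ k) z"
  have "cmod z / 2^k \<le> cmod z" by (simp add: divide_le_eq one_le_power mult_le_cancel_left1)
  hence w: "cmod ?w < \<delta>" using Suc.IH z by linarith
  have e: "2 * Suc k = Suc (Suc (2*k))" by simp
  have q1: "poly (pderiv (pB h)) ?w \<noteq> 0" "poly (pderiv (pB h)) (fB h ?w) \<noteq> 0" using c w by blast+
  have "(relaxed_newton h (pB h) ^^ (2 * Suc k)) (Some z) =
     relaxed_newton h (pB h) (relaxed_newton h (pB h) ((relaxed_newton h (pB h) ^^ (2 * k)) (Some z)))"
    unfolding e by simp
  also have "\<dots> = relaxed_newton h (pB h) (relaxed_newton h (pB h) (Some ?w))"
    by (simp only: conjunct1[OF Suc.IH])
  also have "\<dots> = Some (fB h (fB h ?w))" by (simp only: N_Some[OF q1(1)] N_Some[OF q1(2)])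
  finally have A: "(relaxed_newton h (pB h) ^^ (2 * Suc k)) (Some z) = Some (fB h (fB h ?w))" .
  moreover have "cmod (fB h (fB h ?w)) \<le> cmod z / 2^(Suc k)"
  proof -
    have "cmod (fB h (fB h ?w)) \<le> cmod ?w / 2" using c w by blast
    also have "\<dots> \<le> (cmod z / 2^k) / 2" by (rule divide_right_mono[OF conjunct2[OF Suc.IH]]) simp
    finally show ?thesis by simp
  qed
  moreover have B: "((fB h \<circ> fB h) ^^ Suc k) z = fB h (fB h ?w)" by simp
  ultimately show ?case unfolding B by blast
qed

lemma iter_odd:
  assumes c: "\<forall>z. cmod z < \<delta> \<longrightarrow> poly (pderiv (pB h)) z \<noteq> 0 \<and>
            poly (pderiv (pB h)) (fB h z) \<noteq> 0 \<and> cmod (fB h (fB h z)) \<le> cmod z / 2"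
    and z: "cmod z < \<delta>"
  shows "(relaxed_newton h (pB h) ^^ (Suc (2*k))) (Some z) = Some (fB h (((fB h \<circ> fB h) ^^ k) z))"
proof -
  let ?w = "((fB h \<circ> fB h) ^^ k) z"
  have "cmod z / 2^k \<le> cmod z" by (simp add: divide_le_eq one_le_power mult_le_cancel_left1)
  hence w: "cmod ?w < \<delta>" using iter[OF c z, of k] z by linarith
  have q1: "poly (pderiv (pB h)) ?w \<noteq> 0" using c w by blast
  have "(relaxed_newton h (pB h) ^^ (Suc (2*k))) (Some z) =
     relaxed_newton h (pB h) ((relaxed_newton h (pB h) ^^ (2 * k)) (Some z))" by simp
  also have "\<dots> = relaxed_newton h (pB h) (Some ?w)"
    by (simp only: conjunct1[OF iter[OF c z, of k]])
  also have "\<dots> = Some (fB h ?w)" by (simp only: N_Some[OF q1])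
  finally show ?thesis .
qed

lemma normal_abs:
  assumes op: "\<And>x. x \<in> U \<Longrightarrow> \<exists>d>0. sball x d \<subseteq> U"
    and ev: "\<And>\<epsilon>. \<epsilon> > 0 \<Longrightarrow> \<exists>K. \<forall>k\<ge>K. \<forall>y\<in>U. chordal_dist (F (2*k) y) a < \<epsilon>"
    and od: "\<And>\<epsilon>. \<epsilon> > 0 \<Longrightarrow> \<exists>K. \<forall>k\<ge>K. \<forall>y\<in>U. chordal_dist (F (Suc (2*k)) y) b < \<epsilon>"
  shows "normal_family U F"
  unfolding normal_family_def
proof
  fix r :: "nat \<Rightarrow> nat"
  have unif: "locally_unif_conv U G g"
    if u: "\<And>\<epsilon>. \<epsilon> > 0 \<Longrightarrow> \<exists>N. \<forall>n\<ge>N. \<forall>y\<in>U. chordal_dist (G n y) (g y) < \<epsilon>" for G g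
    unfolding locally_unif_conv_def
  proof
    fix x assume "x \<in> U"
    then obtain d where d: "d > 0" "sball x d \<subseteq> U" using op by blast
    show "\<exists>\<delta>>0. sball x \<delta> \<subseteq> U \<and> (\<forall>\<epsilon>>0. \<exists>N. \<forall>n\<ge>N. \<forall>y\<in>sball x \<delta>. chordal_dist (G n y) (g y) < \<epsilon>)"
    proof (intro exI[of _ d] conjI allI impI)
      fix \<epsilon> :: real assume "\<epsilon> > 0"
      then obtain N where "\<forall>n\<ge>N. \<forall>y\<in>U. chordal_dist (G n y) (g y) < \<epsilon>" using u by blast
      thus "\<exists>N. \<forall>n\<ge>N. \<forall>y\<in>sball x d. chordal_dist (G n y) (g y) < \<epsilon>" using d by blast
    qed (use d in auto)
  qed
  show "\<exists>s g. strict_mono s \<and> locally_unif_conv U (\<lambda>n. F (r (s n))) g"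
  proof (cases "\<exists>c. infinite {n. r n = c}")
    case True
    then obtain c where c: "infinite {n. r n = c}" by blast
    let ?s = "enumerate {n. r n = c}"
    have sm: "strict_mono ?s" using c by (simp add: strict_mono_def enumerate_mono)
    have rs: "r (?s n) = c" for n using enumerate_in_set[OF c, of n] by simp
    have "locally_unif_conv U (\<lambda>n. F (r (?s n))) (F c)"
      by (rule unif) (auto simp: rs chordal_self)
    thus ?thesis using sm by blast
  next
    case False
    hence fin: "finite {n. r n = c}" for c by blast
    have big: "\<exists>N. \<forall>n\<ge>N. r n \<ge> C" for C
    proof -
      have "{n. r n < C} = (\<Union>c<C. {n. r n = c})" by auto
      hence "finite {n. r n < C}" using fin by simp
      then obtain N where N: "\<forall>n\<in>{n. r n < C}. n < N" unfolding finite_nat_set_iff_bounded by blast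
      show ?thesis
      proof (intro exI allI impI)
        fix n assume "N \<le> n" thus "C \<le> r n" using N by (meson leD mem_Collect_eq not_le)
      qed
    qed
    show ?thesis
    proof (cases "infinite {n. even (r n)}")
      case True
      let ?s = "enumerate {n. even (r n)}"
      have sm: "strict_mono ?s" using True by (simp add: strict_mono_def enumerate_mono)
      have ev_s: "even (r (?s n))" for n using enumerate_in_set[OF True, of n] by simp
      have "locally_unif_conv U (\<lambda>n. F (r (?s n))) (\<lambda>_. a)"
      proof (rule unif)
        fix \<epsilon> :: real assume "\<epsilon> > 0"
        then obtain K where K: "\<forall>k\<ge>K. \<forall>y\<in>U. chordal_dist (F (2*k) y) a < \<epsilon>" using ev by blast
        obtain N where N: "\<forall>n\<ge>N. r n \<ge> 2*K" using big by blast
        show "\<exists>N. \<forall>n\<ge>N. \<forall>y\<in>U. chordal_dist (F (r (?s n)) y) a < \<epsilon>"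
        proof (intro exI allI impI ballI)
          fix n y assume n: "N \<le> n" and y: "y \<in> U"
          have "n \<le> ?s n" using seq_suble[OF sm] by blast
          hence r2: "r (?s n) \<ge> 2*K" using N n by auto
          obtain k where k: "r (?s n) = 2*k" using ev_s[of n] by (auto elim: evenE)
          have "k \<ge> K" using r2 k by simp
          thus "chordal_dist (F (r (?s n)) y) a < \<epsilon>" using K y k by auto
        qed
      qed
      thus ?thesis using sm by blast
    next
      case False
      have inf: "infinite {n. odd (r n)}"
      proof
        assume "finite {n. odd (r n)}"
        hence "finite ({n. even (r n)} \<union> {n. odd (r n)})" using False by simp
        moreover have "{n. even (r n)} \<union> {n. odd (r n)} = UNIV" by auto
        ultimately show False by simp
      qed
      let ?s = "enumerate {n. odd (r n)}"
      have sm: "strict_mono ?s" using inf by (simp add: strict_mono_def enumerate_mono)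
      have od_s: "odd (r (?s n))" for n using enumerate_in_set[OF inf, of n] by simp
      have "locally_unif_conv U (\<lambda>n. F (r (?s n))) (\<lambda>_. b)"
      proof (rule unif)
        fix \<epsilon> :: real assume "\<epsilon> > 0"
        then obtain K where K: "\<forall>k\<ge>K. \<forall>y\<in>U. chordal_dist (F (Suc (2*k)) y) b < \<epsilon>" using od by blast
        obtain N where N: "\<forall>n\<ge>N. r n \<ge> 2*K" using big by blast
        show "\<exists>N. \<forall>n\<ge>N. \<forall>y\<in>U. chordal_dist (F (r (?s n)) y) b < \<epsilon>"
        proof (intro exI allI impI ballI)
          fix n y assume n: "N \<le> n" and y: "y \<in> U"
          have "n \<le> ?s n" using seq_suble[OF sm] by blast
          hence r2: "r (?s n) \<ge> 2*K" using N n by auto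
          obtain k where k: "r (?s n) = Suc (2*k)" using od_s[of n] by (auto elim: oddE)
          have "k \<ge> K" using r2 k by simp
          thus "chordal_dist (F (r (?s n)) y) b < \<epsilon>" using K y k by auto
        qed
      qed
      thus ?thesis using sm by blast
    qed
  qed
qed

lemma fatou0: assumes "cmod (h - 1) < 1" shows "Some 0 \<in> fatou_set (relaxed_newton h (pB h))"
proof -
  let ?N = "relaxed_newton h (pB h)" and ?f = "fB h"
  obtain \<delta> where \<delta>: "\<delta> > 0" and c: "\<forall>z. cmod z < \<delta> \<longrightarrow> poly (pderiv (pB h)) z \<noteq> 0 \<and>
            poly (pderiv (pB h)) (fB h z) \<noteq> 0 \<and> cmod (fB h (fB h z)) \<le> cmod z / 2"
    using contraction[OF assms] by blast
  define e where "e = min 1 \<delta>"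
  have e0: "e > 0" using \<delta> by (simp add: e_def)
  have inU: "\<exists>z. y = Some z \<and> cmod z < \<delta>" if "y \<in> sball (Some 0) e" for y
    using sball0 that unfolding e_def by blast
  have "normal_family (sball (Some 0) e) (\<lambda>k. ?N ^^ k)"
  proof (rule normal_abs[where a = "Some 0" and b = "Some 1"])
    fix x assume "x \<in> sball (Some 0) e" thus "\<exists>d>0. sball x d \<subseteq> sball (Some 0) e" by (rule sball_open)
  next
    fix \<epsilon> :: real assume eps: "\<epsilon> > 0"
    obtain K where K: "2*\<delta>/\<epsilon> < 2^K" using real_arch_pow[of 2 "2*\<delta>/\<epsilon>"] by auto
    have K': "2*\<delta>/2^K < \<epsilon>" using K eps by (simp add: field_simps)
    show "\<exists>K. \<forall>k\<ge>K. \<forall>y\<in>sball (Some 0) e. chordal_dist ((?N ^^ (2*k)) y) (Some 0) < \<epsilon>"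
    proof (intro exI[of _ K] allI impI ballI)
      fix k y assume k: "K \<le> k" and y: "y \<in> sball (Some 0) e"
      obtain z where z: "y = Some z" "cmod z < \<delta>" using inU[OF y] by blast
      let ?w = "((?f \<circ> ?f) ^^ k) z"
      have it: "(?N ^^ (2*k)) y = Some ?w" "cmod ?w \<le> cmod z / 2^k" using iter[OF c z(2), of k] z by auto
      have p: "(2::real)^K \<le> 2^k" using k by (simp add: power_increasing)
      have "chordal_dist ((?N ^^ (2*k)) y) (Some 0) \<le> 2 * cmod ?w"
        using chordal_le[of ?w 0] it by simp
      also have "\<dots> \<le> 2 * (cmod z / 2^k)" using it by simp
      also have "\<dots> < 2 * (\<delta> / 2^k)" using z by (simp add: divide_strict_right_mono)
      also have "\<dots> \<le> 2 * (\<delta> / 2^K)" using p \<delta> by (simp add: frac_le)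
      also have "\<dots> < \<epsilon>" using K' by simp
      finally show "chordal_dist ((?N ^^ (2*k)) y) (Some 0) < \<epsilon>" .
    qed
  next
    fix \<epsilon> :: real assume eps: "\<epsilon> > 0"
    obtain \<eta> where \<eta>: "\<eta> > 0" "\<forall>w. cmod w < \<eta> \<longrightarrow> cmod (fB h w - 1) < \<epsilon>/2"
      using f_cont0[OF assms] eps by (meson half_gt_zero)
    obtain K where K: "\<delta>/\<eta> < 2^K" using real_arch_pow[of 2 "\<delta>/\<eta>"] by auto
    have K': "\<delta>/2^K < \<eta>" using K \<eta> by (simp add: field_simps)
    show "\<exists>K. \<forall>k\<ge>K. \<forall>y\<in>sball (Some 0) e. chordal_dist ((?N ^^ Suc (2*k)) y) (Some 1) < \<epsilon>"
    proof (intro exI[of _ K] allI impI ballI)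
      fix k y assume k: "K \<le> k" and y: "y \<in> sball (Some 0) e"
      obtain z where z: "y = Some z" "cmod z < \<delta>" using inU[OF y] by blast
      let ?w = "((?f \<circ> ?f) ^^ k) z"
      have it: "cmod ?w \<le> cmod z / 2^k" using iter[OF c z(2), of k] by auto
      have it2: "(?N ^^ Suc (2*k)) y = Some (?f ?w)" using iter_odd[OF c z(2), of k] z by auto
      have p: "(2::real)^K \<le> 2^k" using k by (simp add: power_increasing)
      have "cmod ?w < \<delta> / 2^k" using it divide_strict_right_mono[OF z(2), of "2^k"] by simp
      also have "\<dots> \<le> \<delta> / 2^K" using p \<delta> by (simp add: frac_le)
      finally have "cmod ?w < \<eta>" using K' by simp
      hence "cmod (?f ?w - 1) < \<epsilon>/2" using \<eta> by blast
      moreover have "chordal_dist ((?N ^^ Suc (2*k)) y) (Some 1) \<le> 2 * cmod (?f ?w - 1)"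
        using chordal_le[of "?f ?w" 1] it2 by simp
      ultimately show "chordal_dist ((?N ^^ Suc (2*k)) y) (Some 1) < \<epsilon>" by simp
    qed
  qed
  thus ?thesis unfolding fatou_set_def using e0 by blast
qed

lemma not_basin: assumes "cmod (h - 1) < 1" and r: "poly (pB h) z = 0"
  shows "Some 0 \<notin> basin (relaxed_newton h (pB h)) (Some z)"
proof
  assume "Some 0 \<in> basin (relaxed_newton h (pB h)) (Some z)"
  hence lim: "(\<lambda>k. chordal_dist ((relaxed_newton h (pB h) ^^ k) (Some 0)) (Some z)) \<longlonglongrightarrow> 0"
    by (simp add: basin_def)
  obtain \<delta> where \<delta>: "\<delta> > 0" and c: "\<forall>z. cmod z < \<delta> \<longrightarrow> poly (pderiv (pB h)) z \<noteq> 0 \<and>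
            poly (pderiv (pB h)) (fB h z) \<noteq> 0 \<and> cmod (fB h (fB h z)) \<le> cmod z / 2"
    using contraction[OF assms(1)] by blast
  have ev: "(relaxed_newton h (pB h) ^^ (2*k)) (Some 0) = Some 0" for k
  proof -
    have "(relaxed_newton h (pB h) ^^ (2*k)) (Some 0) = Some (((fB h \<circ> fB h) ^^ k) 0) \<and>
         cmod (((fB h \<circ> fB h) ^^ k) 0) \<le> cmod 0 / 2^k" using iter[OF c, of 0 k] \<delta> by simp
    thus ?thesis by simp
  qed
  have sm: "strict_mono (\<lambda>k::nat. 2*k)" by (simp add: strict_mono_def)
  have "((\<lambda>k. chordal_dist ((relaxed_newton h (pB h) ^^ k) (Some 0)) (Some z)) \<circ> (\<lambda>k. 2*k)) \<longlonglongrightarrow> 0"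
    by (rule LIMSEQ_subseq_LIMSEQ[OF lim sm])
  hence "(\<lambda>k. chordal_dist (Some 0) (Some z)) \<longlonglongrightarrow> 0" by (simp add: o_def ev)
  hence c0: "chordal_dist (Some 0) (Some z) = 0" by (simp add: LIMSEQ_const_iff)
  have "z \<noteq> 0" using r by (auto simp: pB_simps)
  hence "min 1 (cmod z) > 0" by simp
  thus False using chordal_0[of z] c0 by linarith
qed

theorem theoremB:
  fixes h :: complex
  assumes "cmod (h - 1) < 1"
  shows "\<exists>p :: complex poly. degree p = 3 \<and> rsquarefree p \<and> \<not> unicritical p \<and>
           fatou_set (relaxed_newton h p) \<noteq>
             (\<Union>z\<in>{z. poly p z = 0}. basin (relaxed_newton h p) (Some z))"
proof (intro exI[of _ "pB h"] conjI)
  show "degree (pB h) = 3" by (rule pB_deg[OF assms])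
  show "rsquarefree (pB h)" by (rule pB_rsf[OF assms])
  show "\<not> unicritical (pB h)" by (rule pB_nuni[OF assms])
  show "fatou_set (relaxed_newton h (pB h)) \<noteq>
             (\<Union>z\<in>{z. poly (pB h) z = 0}. basin (relaxed_newton h (pB h)) (Some z))"
    using fatou0[OF assms] not_basin[OF assms] by blast
qed

end
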